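(* Let $\lambda_1,\lambda_2,\lambda_3,\lambda_4$ be non-negative integers with $\gcd(\lambda_1,\lambda_2,\lambda_3,\lambda_4)=1$, and let $h=\lambda_1+\lambda_2+\lambda_3+\lambda_4$. Then for every integer $\kappa\in\{2,\ldots,h-2\}$, $$\sum_{i=1}^4\left\{\frac{\kappa\lambda_i}{h}\right\}\in\{1,2,3\}.$$
   Context: For $q\in\mathbb{Q}$, $\lfloor q\rfloor=\max\{a\in\mathbb{Z}: a\le q\}$ and $\{q\}=q-\lfloor q\rfloor$ denotes the fractional part. *)

theory Defs
  imports Complex_Main
begin

end

theory Submission
  imports Defs
begin

lemma frac_int_dvd:
  fixes k :: int and l h :: nat
  assumes "h > 0" "frac (of_int k * of_nat l / of_nat h :: rat) = 0"
  shows "int h dvd k * int l"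
proof -
  have "(of_int k * of_nat l / of_nat h :: rat) \<in> \<int>" using assms(2) frac_eq_0_iff by blast
  then obtain m where m: "(of_int k * of_nat l / of_nat h :: rat) = of_int m" by (auto elim: Ints_cases)
  hence "(of_int k * of_nat l :: rat) = of_int m * of_nat h" using assms(1) by (simp add: field_simps)
  hence "(of_int (k * int l) :: rat) = of_int (m * int h)" by simp
  hence "k * int l = m * int h" by (simp only: of_int_eq_iff)
  thus ?thesis by (metis dvd_triv_right)
qed

theorem lemma2p3:
  fixes l1 l2 l3 l4 :: nat and h :: nat and k :: int
  assumes "gcd (gcd l1 l2) (gcd l3 l4) = 1"
    and "h = l1 + l2 + l3 + l4"
    and "2 \<le> k" and "k \<le> int h - 2"
  shows "frac (of_int k * of_nat l1 / of_nat h :: rat)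
       + frac (of_int k * of_nat l2 / of_nat h)
       + frac (of_int k * of_nat l3 / of_nat h)
       + frac (of_int k * of_nat l4 / of_nat h) \<in> {1, 2, 3}"
proof -
  define f where "f = (\<lambda>l::nat. (of_int k * of_nat l / of_nat h :: rat))"
  have hpos: "h > 0" using assms by linarith
  have sumk: "f l1 + f l2 + f l3 + f l4 = of_int k"
  proof -
    have hq: "(of_nat h :: rat) \<noteq> 0" using hpos by simp
    have "f l1 + f l2 + f l3 + f l4 = of_int k * (of_nat l1 + of_nat l2 + of_nat l3 + of_nat l4) / of_nat h"
      unfolding f_def by (simp add: add_divide_distrib distrib_left)
    also have "(of_nat l1 + of_nat l2 + of_nat l3 + of_nat l4 :: rat) = of_nat h" using assms(2) by simp
    finally show ?thesis using hq by simp
  qed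
  define S where "S = k - (\<lfloor>f l1\<rfloor> + \<lfloor>f l2\<rfloor> + \<lfloor>f l3\<rfloor> + \<lfloor>f l4\<rfloor>)"
  have Seq: "frac (f l1) + frac (f l2) + frac (f l3) + frac (f l4) = of_int S"
    unfolding S_def frac_def using sumk by (simp add: algebra_simps)
  have b: "0 \<le> frac (f l) \<and> frac (f l) < 1" for l using frac_ge_0 frac_lt_1 by blast
  have "of_int S < (4::rat)" using Seq b[of l1] b[of l2] b[of l3] b[of l4] by linarith
  hence S4: "S < 4" by linarith
  have S0: "S \<noteq> 0"
  proof
    assume "S = 0"
    hence z: "frac (f l1) = 0" "frac (f l2) = 0" "frac (f l3) = 0" "frac (f l4) = 0"
      using Seq b[of l1] b[of l2] b[of l3] b[of l4] by linarith+
    have d: "int h dvd k * int l1" "int h dvd k * int l2" "int h dvd k * int l3" "int h dvd k * int l4"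
      using z frac_int_dvd[OF hpos] unfolding f_def by auto
    have "int h dvd gcd (gcd (k * int l1) (k * int l2)) (gcd (k * int l3) (k * int l4))"
      using d by (simp add: gcd_greatest)
    also have "\<dots> = \<bar>k\<bar> * gcd (gcd (int l1) (int l2)) (gcd (int l3) (int l4))"
      by (simp add: gcd_mult_left abs_mult)
    also have "gcd (gcd (int l1) (int l2)) (gcd (int l3) (int l4)) = int (gcd (gcd l1 l2) (gcd l3 l4))"
      by (simp add: gcd_int_def)
    finally have "int h dvd k" using assms(1) assms(3) by simp
    thus False using assms(3,4) zdvd_imp_le by fastforce
  qed
  have "0 \<le> S" using Seq b[of l1] b[of l2] b[of l3] b[of l4]
    by (metis add_nonneg_nonneg of_int_0_le_iff)
  hence "S = 1 \<or> S = 2 \<or> S = 3" using S4 S0 by linarith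
  thus ?thesis using Seq unfolding f_def by auto
qed

end
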